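(* The $k$-involutions $\mathcal{I}_{t_{(-1,-1)}}$, $\mathcal{I}_{t_{(-1,1)}}$ and $\mathcal{I}_{t_{(1,-1)}}$ of $G$ are pairwise isomorphic.
   Context: Let $k$ be a field with $\mathrm{char}(k)\neq 2$. Let $C$ be the split octonion algebra over $k$: $C=M_2(k)\times M_2(k)$ with elements $(x,y)$, $\bar x=\begin{bmatrix}x_{22}&-x_{12}\\-x_{21}&x_{11}\end{bmatrix}$ for $x=(x_{ij})$, multiplication $(x,y)(u,v)=(xu+\bar v y,\ vx+y\bar u)$, norm $N((x,y))=\det x-\det y$, identity $e=(I_2,0)$. Linear maps on $C$ are $8\times8$ matrices in the ordered basis $(E_{11},0),(E_{12},0),(E_{21},0),(E_{22},0),(0,E_{11}),(0,E_{12}),(0,E_{21}),(0,E_{22})$. $G=\mathrm{Aut}(C)$; $\mathcal{I}_g(x)=gxg^{-1}$. $t_{(\beta,\gamma)}=\mathrm{diag}(1,\beta\gamma,\beta^{-1}\gamma^{-1},1,\gamma^{-1},\beta,\beta^{-1},\gamma)$. A $k$-involution of $G$ is an automorphism of $G$ of order exactly $2$ defined over $k$; $\theta_1\cong\theta_2$ if $\theta_2=\mathcal{I}_g\theta_1\mathcal{I}_g^{-1}$ for some $g\in G(k)$. *)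

theory Defs
  imports "HOL-Analysis.Analysis"
begin

text \<open>2x2 matrices over k, written as (x11, x12, x21, x22).\<close>
type_synonym 'k m2 = "'k \<times> 'k \<times> 'k \<times> 'k"

fun m2_mul :: "'k::field m2 \<Rightarrow> 'k m2 \<Rightarrow> 'k m2" where
  "m2_mul (a11, a12, a21, a22) (b11, b12, b21, b22) =
     (a11*b11 + a12*b21, a11*b12 + a12*b22, a21*b11 + a22*b21, a21*b12 + a22*b22)"

fun m2_add :: "'k::field m2 \<Rightarrow> 'k m2 \<Rightarrow> 'k m2" where
  "m2_add (a11, a12, a21, a22) (b11, b12, b21, b22) = (a11+b11, a12+b12, a21+b21, a22+b22)"

fun m2_bar :: "'k::field m2 \<Rightarrow> 'k m2" where
  "m2_bar (x11, x12, x21, x22) = (x22, - x12, - x21, x11)"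

text \<open>Split octonions C = M2(k) x M2(k).\<close>
type_synonym 'k oct = "'k m2 \<times> 'k m2"

fun oct_mul :: "'k::field oct \<Rightarrow> 'k oct \<Rightarrow> 'k oct" where
  "oct_mul (x, y) (u, v) = (m2_add (m2_mul x u) (m2_mul (m2_bar v) y),
                            m2_add (m2_mul v x) (m2_mul y (m2_bar u)))"

text \<open>Coordinates in the ordered basis (E11,0),(E12,0),(E21,0),(E22,0),(0,E11),...,(0,E22),
  indexed by 0,...,7 of the numeral type 8.\<close>
definition oct_of_vec :: "'k::field ^ 8 \<Rightarrow> 'k oct" where
  "oct_of_vec w = ((w$0, w$1, w$2, w$3), (w$4, w$5, w$6, w$7))"

fun vec_of_oct :: "'k::field oct \<Rightarrow> 'k ^ 8" where
  "vec_of_oct ((a, b, c, d), (e, f, g, h)) =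
     (\<chi> i. if i = 0 then a else if i = 1 then b else if i = 2 then c else if i = 3 then d
           else if i = 4 then e else if i = 5 then f else if i = 6 then g else h)"

definition octmul :: "'k::field ^ 8 \<Rightarrow> 'k ^ 8 \<Rightarrow> 'k ^ 8" where
  "octmul v w = vec_of_oct (oct_mul (oct_of_vec v) (oct_of_vec w))"

text \<open>G(k) = Aut(C)(k): invertible k-linear maps (8x8 matrices) preserving the product.\<close>
definition Gk :: "('k::field ^ 8 ^ 8) set" where
  "Gk = {g. invertible g \<and> (\<forall>x y. g *v octmul x y = octmul (g *v x) (g *v y))}"

definition inn :: "'k::field ^ 8 ^ 8 \<Rightarrow> 'k ^ 8 ^ 8 \<Rightarrow> 'k ^ 8 ^ 8" where
  "inn g x = g ** x ** matrix_inv g"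

definition tdiag :: "'k::field \<Rightarrow> 'k \<Rightarrow> 'k ^ 8 ^ 8" where
  "tdiag \<beta> \<gamma> = (let d = vec_of_oct ((1, \<beta>*\<gamma>, inverse (\<beta>*\<gamma>), 1), (inverse \<gamma>, \<beta>, inverse \<beta>, \<gamma>))
                 in (\<chi> i j. if i = j then d$i else 0))"

definition inv_iso :: "('k::field ^ 8 ^ 8 \<Rightarrow> 'k ^ 8 ^ 8) \<Rightarrow> ('k ^ 8 ^ 8 \<Rightarrow> 'k ^ 8 ^ 8) \<Rightarrow> bool" where
  "inv_iso \<theta>1 \<theta>2 \<longleftrightarrow> (\<exists>g\<in>Gk. \<forall>x\<in>Gk. \<theta>2 x = inn g (\<theta>1 (inn (matrix_inv g) x)))"

end

theory Submission imports Defs begin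

lemma ex8: "(i::8) = 0 \<or> i = 1 \<or> i = 2 \<or> i = 3 \<or> i = 4 \<or> i = 5 \<or> i = 6 \<or> i = 7"
proof (cases i rule: bit0_cases)
  case (of_int z)
  then have "z = 0 \<or> z = 1 \<or> z = 2 \<or> z = 3 \<or> z = 4 \<or> z = 5 \<or> z = 6 \<or> z = 7" by auto
  then show ?thesis using of_int by auto
qed

lemma oct_exhaust: obtains a b c d e f g h where "z = ((a,b,c,d),(e,f,g,h))"
  by (metis prod.exhaust)

lemma ov_vo: "oct_of_vec (vec_of_oct z) = (z::'k::field oct)"
  by (cases z rule: oct_exhaust) (simp add: oct_of_vec_def)

lemma vo_ov: "vec_of_oct (oct_of_vec x) = (x::'k::field^8)"
  unfolding vec_eq_iff oct_of_vec_def
proof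
  fix i :: 8
  show "vec_of_oct ((x $ 0, x $ 1, x $ 2, x $ 3), x $ 4, x $ 5, x $ 6, x $ 7) $ i = x $ i"
    using ex8[of i] by (elim disjE) simp_all
qed

lemma minv_unique:
  fixes A B :: "'k::field^8^8"
  assumes "A ** B = mat 1" "B ** A = mat 1"
  shows "matrix_inv A = B"
proof -
  have "\<exists>C. A ** C = mat 1 \<and> C ** A = mat 1" using assms by blast
  then have C: "A ** matrix_inv A = mat 1 \<and> matrix_inv A ** A = mat 1"
    unfolding matrix_inv_def by (rule someI_ex)
  have "matrix_inv A = matrix_inv A ** (A ** B)" using assms by simp
  also have "\<dots> = B" using C by (simp add: matrix_mul_assoc)
  finally show ?thesis .
qed

lemma diag_mv: "(\<chi> i j. if i = j then d$i else 0) *v x = (\<chi> i. d$i * (x$i::'k::field))"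
proof -
  have "\<And>i. (\<Sum>j\<in>UNIV. (if i = j then d$i else 0) * x$j) = d$i * x$i"
    by (simp add: if_distrib[of "\<lambda>z. z * _"] cong: if_cong)
  then show ?thesis by (simp add: matrix_vector_mult_def vec_eq_iff)
qed

lemma tdiag_mv: "(tdiag b c *v x) = (\<chi> i. (vec_of_oct ((1, b*c, inverse (b*c), 1), (inverse c, b, inverse b, c)))$i * x$i)"
  unfolding tdiag_def Let_def by (rule diag_mv)

definition linf :: "('k::field oct \<Rightarrow> 'k oct) \<Rightarrow> 'k^8 \<Rightarrow> 'k^8" where
  "linf \<phi> = (\<lambda>x. vec_of_oct (\<phi> (oct_of_vec x)))"

definition Mf :: "('k::field oct \<Rightarrow> 'k oct) \<Rightarrow> 'k^8^8" where
  "Mf \<phi> = matrix (linf \<phi>)"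

lemma vs: "vector_space ((*s) :: 'k::field \<Rightarrow> 'k^8 \<Rightarrow> 'k^8)"
  using matrix_vector_mul_linear_gen[of "mat 1 :: 'k^8^8"] unfolding Vector_Spaces.linear_iff by blast

lemma linI:
  assumes "\<And>x y. linf \<phi> (x + y) = linf \<phi> x + linf \<phi> y"
    "\<And>c x. linf \<phi> (c *s x) = c *s linf \<phi> x"
  shows "Vector_Spaces.linear (*s) (*s) (linf (\<phi>::'k::field oct \<Rightarrow> 'k oct))"
  unfolding Vector_Spaces.linear_iff using vs assms by blast

lemma Mf_mv: "Vector_Spaces.linear (*s) (*s) (linf \<phi>) \<Longrightarrow> Mf \<phi> *v x = vec_of_oct (\<phi> (oct_of_vec x))"
  unfolding Mf_def by (simp add: matrix_works linf_def)

lemma aut: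
  fixes \<phi> \<psi> :: "'k::field oct \<Rightarrow> 'k oct"
  assumes l1: "Vector_Spaces.linear (*s) (*s) (linf \<phi>)"
    and l2: "Vector_Spaces.linear (*s) (*s) (linf \<psi>)"
    and i1: "\<And>z. \<phi> (\<psi> z) = z" and i2: "\<And>z. \<psi> (\<phi> z) = z"
    and m: "\<And>a b. \<phi> (oct_mul a b) = oct_mul (\<phi> a) (\<phi> b)"
  shows "Mf \<phi> \<in> Gk" "Mf \<phi> ** Mf \<psi> = mat 1" "Mf \<psi> ** Mf \<phi> = mat 1"
proof -
  show a: "Mf \<phi> ** Mf \<psi> = mat 1"
    unfolding matrix_eq
    by (simp add: matrix_vector_mul_assoc[symmetric] Mf_mv[OF l1] Mf_mv[OF l2] ov_vo i1 vo_ov)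
  show b: "Mf \<psi> ** Mf \<phi> = mat 1"
    unfolding matrix_eq
    by (simp add: matrix_vector_mul_assoc[symmetric] Mf_mv[OF l1] Mf_mv[OF l2] ov_vo i2 vo_ov)
  show "Mf \<phi> \<in> Gk"
    unfolding Gk_def invertible_def
    using a b by (auto simp: Mf_mv[OF l1] octmul_def ov_vo m)
qed

lemma conj:
  fixes g h t1 t2 :: "'k::field^8^8"
  assumes g: "g \<in> Gk" and gh: "g ** h = mat 1" and hg: "h ** g = mat 1"
    and t1: "t1 ** t1 = mat 1" and t2: "t2 ** t2 = mat 1"
    and c: "g ** t1 = t2 ** g"
  shows "inv_iso (inn t1) (inn t2)"
  unfolding inv_iso_def
proof (intro bexI[OF _ g] ballI)
  fix x
  have mg: "matrix_inv g = h" by (rule minv_unique[OF gh hg])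
  have mh: "matrix_inv h = g" by (rule minv_unique[OF hg gh])
  have m1: "matrix_inv t1 = t1" by (rule minv_unique[OF t1 t1])
  have m2: "matrix_inv t2 = t2" by (rule minv_unique[OF t2 t2])
  have "g ** t1 ** h = t2 ** g ** h" using c by simp
  also have "\<dots> = t2" using gh by (simp add: matrix_mul_assoc[symmetric])
  finally have e: "g ** t1 ** h = t2" .
  have "inn g (inn t1 (inn (matrix_inv g) x)) = (g ** t1 ** h) ** x ** (g ** t1 ** h)"
    unfolding inn_def mg mh m1 by (simp add: matrix_mul_assoc)
  also have "\<dots> = inn t2 x" unfolding e inn_def m2 ..
  finally show "inn t2 x = inn g (inn t1 (inn (matrix_inv g) x))" by simp
qed

fun p1 :: "'k::field oct \<Rightarrow> 'k oct" where
  "p1 ((a,b,c,d),(e,f,g,h)) = ((a,e,h,d),(b,-f,-g,c))"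

lemma lin_p1: "Vector_Spaces.linear (*s) (*s) (linf (p1::'k::field oct \<Rightarrow> 'k oct))"
  by (rule linI) (simp_all add: linf_def oct_of_vec_def vec_eq_iff)

lemma p1p1: "p1 (p1 z) = z"
  by (cases z rule: oct_exhaust) simp

lemma p1m: "p1 (oct_mul a b) = oct_mul (p1 a) (p1 b)"
  by (cases a rule: oct_exhaust; cases b rule: oct_exhaust) (simp add: algebra_simps)

lemma t_sq:
  assumes "b*b = 1" "c*c = (1::'k::field)"
  shows "tdiag b c ** tdiag b c = mat 1"
  unfolding matrix_eq
proof
  fix x :: "'k^8"
  have bi: "inverse b = b" "inverse c = c" using assms by (simp_all add: inverse_unique)
  have bc: "(b*c)*(b*c) = 1" using assms by (metis mult.assoc mult.left_commute mult_1_right)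
  have bc2: "b*c*b*c = 1" using bc by (simp add: mult.assoc)
  have bci: "inverse (b*c) = b*c" by (simp add: bi)
  show "(tdiag b c ** tdiag b c) *v x = mat 1 *v x"
    unfolding matrix_vector_mul_assoc[symmetric] tdiag_mv vec_eq_iff
    apply (rule allI)
    subgoal for i using ex8[of i] by (elim disjE) (simp_all add: bi bci assms bc bc2 mult.assoc[symmetric])
    done
qed

lemma c1: "Mf p1 ** tdiag (-1) (-1) = tdiag (-1) (1::'k::field) ** Mf p1"
  unfolding matrix_eq matrix_vector_mul_assoc[symmetric] Mf_mv[OF lin_p1] tdiag_mv
  by (simp add: oct_of_vec_def vec_eq_iff)

fun p2 :: "'k::field oct \<Rightarrow> 'k oct" where
  "p2 ((a,b,c,d),(e,f,g,h)) = ((a,e,h,d),(g,-c,b,-f))"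
fun q2 :: "'k::field oct \<Rightarrow> 'k oct" where
  "q2 ((a,b,c,d),(e,f,g,h)) = ((a,g,-f,d),(b,-h,e,c))"
fun p3 :: "'k::field oct \<Rightarrow> 'k oct" where
  "p3 ((a,b,c,d),(e,f,g,h)) = ((a,b,c,d),(-g,-h,e,f))"
fun q3 :: "'k::field oct \<Rightarrow> 'k oct" where
  "q3 ((a,b,c,d),(e,f,g,h)) = ((a,b,c,d),(g,h,-e,-f))"

lemma lin_p2: "Vector_Spaces.linear (*s) (*s) (linf (p2::'k::field oct \<Rightarrow> 'k oct))"
  by (rule linI) (simp_all add: linf_def oct_of_vec_def vec_eq_iff)
lemma lin_q2: "Vector_Spaces.linear (*s) (*s) (linf (q2::'k::field oct \<Rightarrow> 'k oct))"
  by (rule linI) (simp_all add: linf_def oct_of_vec_def vec_eq_iff)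
lemma lin_p3: "Vector_Spaces.linear (*s) (*s) (linf (p3::'k::field oct \<Rightarrow> 'k oct))"
  by (rule linI) (simp_all add: linf_def oct_of_vec_def vec_eq_iff)
lemma lin_q3: "Vector_Spaces.linear (*s) (*s) (linf (q3::'k::field oct \<Rightarrow> 'k oct))"
  by (rule linI) (simp_all add: linf_def oct_of_vec_def vec_eq_iff)

lemma p2q2: "p2 (q2 z) = z" by (cases z rule: oct_exhaust) simp
lemma q2p2: "q2 (p2 z) = z" by (cases z rule: oct_exhaust) simp
lemma p3q3: "p3 (q3 z) = z" by (cases z rule: oct_exhaust) simp
lemma q3p3: "q3 (p3 z) = z" by (cases z rule: oct_exhaust) simp

lemma p2m: "p2 (oct_mul a b) = oct_mul (p2 a) (p2 b)"
  by (cases a rule: oct_exhaust; cases b rule: oct_exhaust) (simp add: algebra_simps)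
lemma p3m: "p3 (oct_mul a b) = oct_mul (p3 a) (p3 b)"
  by (cases a rule: oct_exhaust; cases b rule: oct_exhaust) (simp add: algebra_simps)

lemma c2: "Mf p2 ** tdiag (-1) (-1) = tdiag 1 (-1::'k::field) ** Mf p2"
  unfolding matrix_eq matrix_vector_mul_assoc[symmetric] Mf_mv[OF lin_p2] tdiag_mv
  by (simp add: oct_of_vec_def vec_eq_iff)
lemma c3: "Mf p3 ** tdiag (-1) 1 = tdiag 1 (-1::'k::field) ** Mf p3"
  unfolding matrix_eq matrix_vector_mul_assoc[symmetric] Mf_mv[OF lin_p3] tdiag_mv
  by (simp add: oct_of_vec_def vec_eq_iff)

lemmas A1 = aut[OF lin_p1 lin_p1 p1p1 p1p1 p1m]
lemmas A2 = aut[OF lin_p2 lin_q2 p2q2 q2p2 p2m]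
lemmas A3 = aut[OF lin_p3 lin_q3 p3q3 q3p3 p3m]

theorem mainTheorem6:
  assumes "(2::'k::field) \<noteq> 0"
  shows "inv_iso (inn (tdiag (-1::'k) (-1))) (inn (tdiag (-1) 1))
       \<and> inv_iso (inn (tdiag (-1::'k) (-1))) (inn (tdiag 1 (-1)))
       \<and> inv_iso (inn (tdiag (-1::'k) 1)) (inn (tdiag 1 (-1)))"
proof (intro conjI)
  have s1: "tdiag (-1::'k) (-1) ** tdiag (-1) (-1) = mat 1" by (rule t_sq) simp_all
  have s2: "tdiag (-1::'k) 1 ** tdiag (-1) 1 = mat 1" by (rule t_sq) simp_all
  have s3: "tdiag (1::'k) (-1) ** tdiag 1 (-1) = mat 1" by (rule t_sq) simp_all
  show "inv_iso (inn (tdiag (-1::'k) (-1))) (inn (tdiag (-1) 1))"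
    by (rule conj[OF A1 s1 s2 c1])
  show "inv_iso (inn (tdiag (-1::'k) (-1))) (inn (tdiag 1 (-1)))"
    by (rule conj[OF A2 s1 s3 c2])
  show "inv_iso (inn (tdiag (-1::'k) 1)) (inn (tdiag 1 (-1)))"
    by (rule conj[OF A3 s2 s3 c3])
qed

end
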